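(* For any graph $G$ with connected components $G_1,\dots,G_n$, we have $\lfloor \mathrm{sp}\rfloor(G)=\lfloor \mathrm{sp}\rfloor(G_1)+\cdots+\lfloor \mathrm{sp}\rfloor(G_n)$.
   Context: All graphs are finite, have at least one vertex, have no loops, and may have multiple (parallel) edges. A unique shortest path is a shortest $u$–$v$ path $P$ such that every $u$–$v$ path with the same number of vertices is identical to $P$, where two paths with different edge sequences are different even if their vertex sequences agree; a single vertex is a unique shortest path. The parade number $\mathrm{usp}(G)$ is the largest number of vertices of a unique shortest path in $G$. The spectator number is $\mathrm{sp}(G)=|V(G)|-\mathrm{usp}(G)$. A minor of $H$ is any graph obtained from $H$ by a sequence of: deleting an isolated vertex, deleting an edge, contracting an edge that has no edge parallel to it. The spectator floor $\lfloor \mathrm{sp}\rfloor(G)$ is the minimum of $\mathrm{sp}(H)$ over all graphs $H$ of which $G$ is a minor. *)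

theory Defs
  imports Main
begin

text \<open>Finite multigraphs without loops. Vertices and edges are natural numbers
(every finite graph is isomorphic to such a graph); each edge e has a 2-element
set of ends.\<close>

record mgraph =
  verts :: "nat set"
  edges :: "nat set"
  ends  :: "nat \<Rightarrow> nat set"

definition is_graph :: "mgraph \<Rightarrow> bool" where
  "is_graph G \<longleftrightarrow> finite (verts G) \<and> verts G \<noteq> {} \<and> finite (edges G) \<and>
     (\<forall>e\<in>edges G. ends G e \<subseteq> verts G \<and> card (ends G e) = 2)"

text \<open>A path: vertex sequence and edge sequence (edges distinguish parallel paths).\<close>
definition is_path :: "mgraph \<Rightarrow> nat list \<Rightarrow> nat list \<Rightarrow> bool" where
  "is_path G vs es \<longleftrightarrow> length vs = Suc (length es) \<and> distinct vs \<and>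
     set vs \<subseteq> verts G \<and>
     (\<forall>i<length es. es ! i \<in> edges G \<and> ends G (es ! i) = {vs ! i, vs ! Suc i})"

definition is_uv_path :: "mgraph \<Rightarrow> nat \<Rightarrow> nat \<Rightarrow> nat list \<Rightarrow> nat list \<Rightarrow> bool" where
  "is_uv_path G u v vs es \<longleftrightarrow> is_path G vs es \<and> hd vs = u \<and> last vs = v"

definition is_usp :: "mgraph \<Rightarrow> nat list \<Rightarrow> nat list \<Rightarrow> bool" where
  "is_usp G vs es \<longleftrightarrow> is_path G vs es \<and>
     (\<forall>vs' es'. is_uv_path G (hd vs) (last vs) vs' es' \<longrightarrow> length vs \<le> length vs') \<and>
     (\<forall>vs' es'. is_uv_path G (hd vs) (last vs) vs' es' \<and> length vs' = length vs \<longrightarrow>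
         vs' = vs \<and> es' = es)"

definition usp :: "mgraph \<Rightarrow> nat" where
  "usp G = Max {length vs | vs es. is_usp G vs es}"

definition sp :: "mgraph \<Rightarrow> nat" where
  "sp G = card (verts G) - usp G"

definition graph_iso :: "mgraph \<Rightarrow> mgraph \<Rightarrow> bool" where
  "graph_iso G H \<longleftrightarrow> (\<exists>f g. bij_betw f (verts G) (verts H) \<and> bij_betw g (edges G) (edges H) \<and>
     (\<forall>e\<in>edges G. ends H (g e) = f ` ends G e))"

definition minor_step :: "mgraph \<Rightarrow> mgraph \<Rightarrow> bool" where
  "minor_step H H' \<longleftrightarrow> is_graph H \<and> is_graph H' \<and>
    ((\<exists>v\<in>verts H. (\<forall>e\<in>edges H. v \<notin> ends H e) \<and>
        H' = \<lparr>verts = verts H - {v}, edges = edges H, ends = ends H\<rparr>)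
   \<or> (\<exists>e\<in>edges H. H' = \<lparr>verts = verts H, edges = edges H - {e}, ends = ends H\<rparr>)
   \<or> (\<exists>e\<in>edges H. \<exists>u v. ends H e = {u, v} \<and> u \<noteq> v \<and>
        (\<forall>f\<in>edges H. f \<noteq> e \<longrightarrow> ends H f \<noteq> ends H e) \<and>
        H' = \<lparr>verts = verts H - {v}, edges = edges H - {e},
              ends = (\<lambda>f. (\<lambda>x. if x = v then u else x) ` ends H f)\<rparr>))"

definition is_minor :: "mgraph \<Rightarrow> mgraph \<Rightarrow> bool" where
  "is_minor G H \<longleftrightarrow> is_graph H \<and> (\<exists>G'. minor_step\<^sup>*\<^sup>* H G' \<and> graph_iso G' G)"

definition sp_floor :: "mgraph \<Rightarrow> nat" where
  "sp_floor G = (LEAST k. \<exists>H. is_graph H \<and> is_minor G H \<and> sp H = k)"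

definition adj :: "mgraph \<Rightarrow> nat \<Rightarrow> nat \<Rightarrow> bool" where
  "adj G x y \<longleftrightarrow> (\<exists>e\<in>edges G. ends G e = {x, y})"

definition components :: "mgraph \<Rightarrow> nat set set" where
  "components G = {C. \<exists>v\<in>verts G. C = {w \<in> verts G. (adj G)\<^sup>*\<^sup>* v w}}"

definition induced :: "mgraph \<Rightarrow> nat set \<Rightarrow> mgraph" where
  "induced G C = \<lparr>verts = C, edges = {e \<in> edges G. ends G e \<subseteq> C}, ends = ends G\<rparr>"

end

theory Submission
  imports Defs
begin

lemma all_less_Suc_split: "(\<forall>i<Suc n. P i) \<longleftrightarrow> P 0 \<and> (\<forall>i<n. P (Suc i))"
  by (metis less_Suc_eq_0_disj)

lemma is_path_Nil[simp]: "\<not> is_path H [] es"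
  by (simp add: is_path_def)

lemma is_path_single[simp]: "is_path H [x] es \<longleftrightarrow> es = [] \<and> x \<in> verts H"
  by (auto simp: is_path_def)

lemma is_path_Cons2: "is_path H (x # y # vs) es \<longleftrightarrow>
  (\<exists>e es'. es = e # es' \<and> e \<in> edges H \<and> ends H e = {x,y} \<and> x \<in> verts H \<and>
     x \<notin> set (y # vs) \<and> is_path H (y # vs) es')"
proof (cases es)
  case Nil then show ?thesis by (simp add: is_path_def)
next
  case (Cons e es')
  show ?thesis unfolding Cons is_path_def
    apply (simp only: length_Cons all_less_Suc_split)
    apply auto
    done
qed

definition conn_in :: "mgraph \<Rightarrow> nat set \<Rightarrow> nat \<Rightarrow> nat \<Rightarrow> bool" where
  "conn_in H B = (\<lambda>a b. a \<in> B \<and> b \<in> B \<and> adj H a b)\<^sup>*\<^sup>*"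

definition model :: "mgraph \<Rightarrow> mgraph \<Rightarrow> (nat \<Rightarrow> nat) \<Rightarrow> nat set \<Rightarrow> (nat \<Rightarrow> nat) \<Rightarrow> bool" where
  "model K H \<phi> D \<psi> \<longleftrightarrow> D \<subseteq> verts H \<and> \<phi> ` D = verts K \<and>
     (\<forall>x\<in>D. \<forall>y\<in>D. \<phi> x = \<phi> y \<longrightarrow> conn_in H {z\<in>D. \<phi> z = \<phi> x} x y) \<and>
     inj_on \<psi> (edges K) \<and>
     (\<forall>e\<in>edges K. \<psi> e \<in> edges H \<and> \<phi> ` ends H (\<psi> e) = ends K e \<and> ends H (\<psi> e) \<subseteq> D)"

lemma conn_refl[simp]: "conn_in H B x x"
  by (simp add: conn_in_def)

lemma conn_step: "a \<in> B \<Longrightarrow> b \<in> B \<Longrightarrow> adj H a b \<Longrightarrow> conn_in H B a b"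
  by (simp add: conn_in_def r_into_rtranclp)

lemma conn_trans: "conn_in H B x y \<Longrightarrow> conn_in H B y z \<Longrightarrow> conn_in H B x z"
  unfolding conn_in_def by (rule rtranclp_trans)

lemma conn_map:
  assumes "conn_in H B x y"
    and "\<And>a b. a \<in> B \<Longrightarrow> b \<in> B \<Longrightarrow> adj H a b \<Longrightarrow> conn_in H' B' (f a) (f b)"
  shows "conn_in H' B' (f x) (f y)"
  using assms(1) unfolding conn_in_def
proof (induction rule: rtranclp_induct)
  case base then show ?case by simp
next
  case (step y z)
  then show ?case using assms(2)[of y z] unfolding conn_in_def by (meson rtranclp_trans)
qed

lemma conn_mono:
  assumes "conn_in H B x y"
    and "\<And>a b. a \<in> B \<Longrightarrow> b \<in> B \<Longrightarrow> adj H a b \<Longrightarrow> a \<in> B' \<and> b \<in> B' \<and> adj H' a b"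
  shows "conn_in H' B' x y"
  using conn_map[of H B x y H' B' id] assms by (simp add: conn_step)

lemma adj_sym: "adj H a b \<Longrightarrow> adj H b a"
  by (auto simp: adj_def insert_commute)

lemma conn_sym: "conn_in H B x y \<Longrightarrow> conn_in H B y x"
  unfolding conn_in_def
  by (induction rule: rtranclp_induct) (auto intro: converse_rtranclp_into_rtranclp adj_sym)

lemma model_iso:
  assumes "graph_iso G' K" "is_graph G'"
  shows "\<exists>\<phi> D \<psi>. model K G' \<phi> D \<psi>"
proof -
  from assms(1) obtain f g where f: "bij_betw f (verts G') (verts K)"
    and g: "bij_betw g (edges G') (edges K)"
    and fg: "\<forall>e\<in>edges G'. ends K (g e) = f ` ends G' e"
    unfolding graph_iso_def by blast
  let ?\<psi> = "inv_into (edges G') g"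
  have "model K G' f (verts G') ?\<psi>"
    unfolding model_def
  proof (intro conjI ballI impI)
    show "f ` verts G' = verts K" using f by (simp add: bij_betw_def)
    fix x y assume "x \<in> verts G'" "y \<in> verts G'" "f x = f y"
    then have "x = y" using f by (auto simp: bij_betw_def inj_on_def)
    then show "conn_in G' {z \<in> verts G'. f z = f x} x y" by simp
  next
    show "inj_on ?\<psi> (edges K)" using g
      by (metis bij_betw_def inj_on_inv_into subset_refl)
  next
    fix e assume e: "e \<in> edges K"
    show "?\<psi> e \<in> edges G'" using g e by (metis bij_betw_def inv_into_into)
    then show "f ` ends G' (?\<psi> e) = ends K e" using fg g e
      by (metis bij_betw_def f_inv_into_f)
    show "ends G' (?\<psi> e) \<subseteq> verts G'" using assms(2) \<open>?\<psi> e \<in> edges G'\<close>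
      by (simp add: is_graph_def)
  qed auto
  then show ?thesis by blast
qed

lemma model_lift_vdel:
  assumes "model K \<lparr>verts = verts H - {v}, edges = edges H, ends = ends H\<rparr> \<phi> D \<psi>"
  shows "model K H \<phi> D \<psi>"
proof -
  have a: "adj \<lparr>verts = verts H - {v}, edges = edges H, ends = ends H\<rparr> = adj H"
    by (simp add: adj_def fun_eq_iff)
  show ?thesis using assms unfolding model_def conn_in_def a by auto
qed

lemma model_lift_edel:
  assumes "model K \<lparr>verts = verts H, edges = edges H - {e}, ends = ends H\<rparr> \<phi> D \<psi>"
  shows "model K H \<phi> D \<psi>"
proof -
  let ?H' = "\<lparr>verts = verts H, edges = edges H - {e}, ends = ends H\<rparr>"
  have a: "adj ?H' a b \<Longrightarrow> adj H a b" for a b by (auto simp: adj_def)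
  have c: "conn_in ?H' B x y \<Longrightarrow> conn_in H B x y" for B x y
    by (erule conn_mono) (auto intro: a)
  show ?thesis using assms c unfolding model_def by auto
qed

lemma model_lift_contract:
  assumes G: "is_graph H"
    and e: "e \<in> edges H" "ends H e = {u, v}" "u \<noteq> v"
    and M: "model K \<lparr>verts = verts H - {v}, edges = edges H - {e},
              ends = (\<lambda>f. (\<lambda>x. if x = v then u else x) ` ends H f)\<rparr> \<phi> D \<psi>"
  shows "\<exists>\<phi> D \<psi>. model K H \<phi> D \<psi>"
proof -
  define \<sigma> where "\<sigma> = (\<lambda>x::nat. if x = v then u else x)"
  define H' where "H' = \<lparr>verts = verts H - {v}, edges = edges H - {e},
              ends = (\<lambda>f. \<sigma> ` ends H f)\<rparr>"
  have M': "model K H' \<phi> D \<psi>" using M by (simp add: H'_def \<sigma>_def)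
  define D' where "D' = {z \<in> verts H. \<sigma> z \<in> D}"
  have DV: "D \<subseteq> verts H - {v}" using M' by (simp add: model_def H'_def)
  have uV: "u \<in> verts H" "v \<in> verts H" using G e by (auto simp: is_graph_def)
  have sD: "\<sigma> ` D' = D"
  proof
    show "\<sigma> ` D' \<subseteq> D" by (auto simp: D'_def)
    show "D \<subseteq> \<sigma> ` D'"
    proof
      fix z assume "z \<in> D"
      then have "z \<noteq> v" "z \<in> verts H" using DV by auto
      then have "\<sigma> z = z" by (simp add: \<sigma>_def)
      then show "z \<in> \<sigma> ` D'" using \<open>z \<in> D\<close> \<open>z \<in> verts H\<close> unfolding D'_def by force
    qed
  qed
  have lift: "conn_in H {z \<in> D'. \<phi> (\<sigma> z) = c} p (\<sigma> p)"
    if "p \<in> verts H" "\<sigma> p \<in> D" "\<phi> (\<sigma> p) = c" for p c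
  proof (cases "p = v")
    case True
    then have "\<sigma> p = u" by (simp add: \<sigma>_def)
    have "adj H v u" using e by (auto simp: adj_def insert_commute)
    moreover have "v \<in> {z \<in> D'. \<phi> (\<sigma> z) = c}" "u \<in> {z \<in> D'. \<phi> (\<sigma> z) = c}"
      using that True \<open>\<sigma> p = u\<close> uV e(3) by (auto simp: D'_def \<sigma>_def)
    ultimately show ?thesis using True \<open>\<sigma> p = u\<close> by (simp add: conn_step)
  next
    case False then show ?thesis by (simp add: \<sigma>_def)
  qed
  have "model K H (\<phi> \<circ> \<sigma>) D' \<psi>"
    unfolding model_def
  proof (intro conjI ballI impI)
    show "D' \<subseteq> verts H" by (auto simp: D'_def)
    have "(\<phi> \<circ> \<sigma>) ` D' = \<phi> ` (\<sigma> ` D')" by (rule image_comp[symmetric])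
    then show "(\<phi> \<circ> \<sigma>) ` D' = verts K" using M' sD by (simp only: model_def)
    show "inj_on \<psi> (edges K)" using M' by (simp add: model_def)
  next
    fix x y assume x: "x \<in> D'" and y: "y \<in> D'" and xy: "(\<phi> \<circ> \<sigma>) x = (\<phi> \<circ> \<sigma>) y"
    let ?c = "\<phi> (\<sigma> x)"
    let ?B = "{z \<in> D. \<phi> z = ?c}"
    let ?B' = "{z \<in> D'. \<phi> (\<sigma> z) = ?c}"
    have sx: "\<sigma> x \<in> D" "\<sigma> y \<in> D" using x y by (auto simp: D'_def)
    have c1: "conn_in H' ?B (\<sigma> x) (\<sigma> y)" using M' sx xy by (auto simp: model_def)
    have c2: "conn_in H ?B' (id (\<sigma> x)) (id (\<sigma> y))"
    proof (rule conn_map[OF c1])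
      fix a b assume a: "a \<in> ?B" and b: "b \<in> ?B" and ab: "adj H' a b"
      from ab obtain g where g: "g \<in> edges H" "g \<noteq> e" "\<sigma> ` ends H g = {a, b}"
        by (auto simp: adj_def H'_def)
      have "card (ends H g) = 2" using G g by (simp add: is_graph_def)
      then obtain p q where pq: "ends H g = {p, q}" by (meson card_2_iff)
      have pqV: "p \<in> verts H" "q \<in> verts H" using G g pq by (auto simp: is_graph_def)
      have adjpq: "adj H p q" using g pq by (auto simp: adj_def)
      have spq: "{\<sigma> p, \<sigma> q} = {a, b}" using g pq by simp
      have gen: "conn_in H ?B' a b" if "\<sigma> p' = a" "\<sigma> q' = b" "adj H p' q'"
        "p' \<in> verts H" "q' \<in> verts H" for p' q'
      proof -
        have pB: "p' \<in> ?B'" "q' \<in> ?B'"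
          using that a b by (auto simp: D'_def)
        have "conn_in H ?B' a p'" using lift[of p' ?c] that a conn_sym by auto
        moreover have "conn_in H ?B' p' q'" using pB that by (simp add: conn_step)
        moreover have "conn_in H ?B' q' b" using lift[of q' ?c] that b by auto
        ultimately show ?thesis by (meson conn_trans)
      qed
      have "(\<sigma> p = a \<and> \<sigma> q = b) \<or> (\<sigma> q = a \<and> \<sigma> p = b)" using spq by (metis doubleton_eq_iff)
      then show "conn_in H ?B' (id a) (id b)"
        using gen[of p q] gen[of q p] adjpq adj_sym pqV by auto
    qed
    have c0: "conn_in H ?B' x (\<sigma> x)" using lift[of x ?c] x by (auto simp: D'_def)
    have c3: "conn_in H ?B' y (\<sigma> y)" using lift[of y ?c] y xy by (auto simp: D'_def)
    have "conn_in H ?B' x y" using c0 c2 conn_sym[OF c3] by (auto intro: conn_trans)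
    then show "conn_in H {z \<in> D'. (\<phi> \<circ> \<sigma>) z = (\<phi> \<circ> \<sigma>) x} x y" by simp
  next
    fix f assume f: "f \<in> edges K"
    have m: "\<psi> f \<in> edges H'" "\<phi> ` ends H' (\<psi> f) = ends K f" "ends H' (\<psi> f) \<subseteq> D"
      using M' f by (auto simp: model_def)
    then show "\<psi> f \<in> edges H" by (simp add: H'_def)
    have "ends H (\<psi> f) \<subseteq> verts H" using G \<open>\<psi> f \<in> edges H\<close> by (simp add: is_graph_def)
    then show "ends H (\<psi> f) \<subseteq> D'" using m(3) by (auto simp: D'_def H'_def)
    show "(\<phi> \<circ> \<sigma>) ` ends H (\<psi> f) = ends K f" using m(2)
      by (simp add: H'_def image_comp)
  qed
  then show ?thesis by blast
qed

lemma model_lift_step: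
  assumes "minor_step H H'" "model K H' \<phi> D \<psi>"
  shows "\<exists>\<phi> D \<psi>. model K H \<phi> D \<psi>"
proof -
  have G: "is_graph H" using assms(1) by (simp add: minor_step_def)
  consider (v) v where "H' = \<lparr>verts = verts H - {v}, edges = edges H, ends = ends H\<rparr>"
    | (e) e where "H' = \<lparr>verts = verts H, edges = edges H - {e}, ends = ends H\<rparr>"
    | (c) e u v where "e \<in> edges H" "ends H e = {u, v}" "u \<noteq> v"
        "H' = \<lparr>verts = verts H - {v}, edges = edges H - {e},
              ends = (\<lambda>f. (\<lambda>x. if x = v then u else x) ` ends H f)\<rparr>"
    using assms(1) unfolding minor_step_def by blast
  then show ?thesis
  proof cases
    case v then show ?thesis using assms(2) model_lift_vdel by blast
  next
    case e then show ?thesis using assms(2) model_lift_edel by blast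
  next
    case c then show ?thesis using assms(2) model_lift_contract[OF G c(1-3)] by blast
  qed
qed

lemma minor_model:
  assumes "is_minor K H"
  shows "\<exists>\<phi> D \<psi>. model K H \<phi> D \<psi>"
proof -
  from assms obtain G' where H: "is_graph H" and r: "minor_step\<^sup>*\<^sup>* H G'" and i: "graph_iso G' K"
    unfolding is_minor_def by blast
  have "is_graph x \<longrightarrow> (\<exists>\<phi> D \<psi>. model K x \<phi> D \<psi>)" if "minor_step\<^sup>*\<^sup>* x G'" for x
    using that
  proof (induction rule: converse_rtranclp_induct)
    case base then show ?case using model_iso[OF i] by blast
  next
    case (step y z)
    then have "is_graph z" by (simp add: minor_step_def)
    then show ?case using step model_lift_step by blast
  qed
  then show ?thesis using r H by blast
qed

definition del_e :: "mgraph \<Rightarrow> nat \<Rightarrow> mgraph" where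
  "del_e H f = \<lparr>verts = verts H, edges = edges H - {f}, ends = ends H\<rparr>"

lemma is_minor_step:
  assumes "minor_step H H'" "is_minor K H'"
  shows "is_minor K H"
proof -
  have "is_graph H" using assms(1) by (simp add: minor_step_def)
  moreover from assms(2) obtain G' where "minor_step\<^sup>*\<^sup>* H' G'" "graph_iso G' K"
    unfolding is_minor_def by blast
  ultimately show ?thesis unfolding is_minor_def
    using converse_rtranclp_into_rtranclp[of minor_step H H' G'] assms(1) by blast
qed

lemma is_graph_del_e: "is_graph H \<Longrightarrow> is_graph (del_e H f)"
  by (simp add: is_graph_def del_e_def)

lemma minor_step_del_e:
  assumes "is_graph H" "f \<in> edges H"
  shows "minor_step H (del_e H f)"
proof -
  have "\<exists>e\<in>edges H. del_e H f = \<lparr>verts = verts H, edges = edges H - {e}, ends = ends H\<rparr>"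
    using assms(2) by (intro bexI[of _ f]) (simp_all add: del_e_def)
  then show ?thesis unfolding minor_step_def using assms(1) is_graph_del_e[of H f] by blast
qed

lemma psi_not_inside:
  assumes "model K H \<phi> D \<psi>" "is_graph K" "e \<in> edges K" "ends H (\<psi> e) = {p, q}"
  shows "\<phi> p \<noteq> \<phi> q"
proof
  assume pq: "\<phi> p = \<phi> q"
  have "ends K e = \<phi> ` ends H (\<psi> e)" using assms(1,3) by (simp add: model_def)
  also have "\<dots> = {\<phi> p}" using assms(4) pq by simp
  finally have "ends K e = {\<phi> p}" .
  then show False using assms(2,3) by (auto simp: is_graph_def)
qed

lemma model_minor:
  assumes "is_graph H" "is_graph K" "model K H \<phi> D \<psi>"
  shows "is_minor K H"
  using assms
proof (induction "card (verts H) + card (edges H)" arbitrary: H D rule: less_induct)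
  case less
  note G = less.prems(1) and GK = less.prems(2) and M = less.prems(3)
  have fin: "finite (verts H)" "finite (edges H)" using G by (auto simp: is_graph_def)
  have DV: "D \<subseteq> verts H" using M by (simp add: model_def)
  have Dne: "D \<noteq> {}" using M GK by (auto simp: model_def is_graph_def)
  have psiE: "\<psi> e \<in> edges H" "\<phi> ` ends H (\<psi> e) = ends K e" "ends H (\<psi> e) \<subseteq> D"
    if "e \<in> edges K" for e using M that by (auto simp: model_def)
  show ?case
  proof (cases "\<exists>f\<in>edges H. f \<notin> \<psi> ` edges K \<and> model K (del_e H f) \<phi> D \<psi>")
    case True
    then obtain f where f: "f \<in> edges H" "model K (del_e H f) \<phi> D \<psi>" by blast
    have "card (edges (del_e H f)) < card (edges H)"
      using card_Diff1_less[OF fin(2) f(1)] by (simp add: del_e_def)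
    then have "is_minor K (del_e H f)"
      by (intro less.hyps[OF _ is_graph_del_e[OF G] GK f(2)]) (simp add: del_e_def)
    then show ?thesis by (rule is_minor_step[OF minor_step_del_e[OF G f(1)]])
  next
    case nodel: False
    show ?thesis
    proof (cases "\<exists>x\<in>verts H. x \<notin> D")
      case True
      then obtain x where x: "x \<in> verts H" "x \<notin> D" by blast
      have iso: "\<forall>f\<in>edges H. x \<notin> ends H f"
      proof (intro ballI notI)
        fix f assume f: "f \<in> edges H" "x \<in> ends H f"
        have "f \<notin> \<psi> ` edges K" using psiE f x by blast
        moreover have "model K (del_e H f) \<phi> D \<psi>"
          unfolding model_def
        proof (intro conjI ballI impI)
          fix a b assume "a \<in> D" "b \<in> D" "\<phi> a = \<phi> b"
          then have "conn_in H {z \<in> D. \<phi> z = \<phi> a} a b" using M by (auto simp: model_def)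
          then show "conn_in (del_e H f) {z \<in> D. \<phi> z = \<phi> a} a b"
            by (rule conn_mono) (use f x in \<open>auto simp: adj_def del_e_def\<close>)
        next
          fix e assume e: "e \<in> edges K"
          show "\<psi> e \<in> edges (del_e H f)" using psiE[OF e] f x by (auto simp: del_e_def)
        qed (use M psiE in \<open>auto simp: model_def del_e_def\<close>)
        ultimately show False using nodel f by blast
      qed
      define H' where "H' = \<lparr>verts = verts H - {x}, edges = edges H, ends = ends H\<rparr>"
      have G': "is_graph H'" using G iso Dne DV x unfolding H'_def is_graph_def by auto
      have st: "minor_step H H'" unfolding minor_step_def using G G' x iso H'_def by blast
      have aa: "adj H' = adj H" by (simp add: adj_def H'_def fun_eq_iff)
      have M': "model K H' \<phi> D \<psi>" using M DV x unfolding model_def conn_in_def aa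
        by (auto simp: H'_def)
      have "card (verts H') < card (verts H)" using card_Diff1_less[OF fin(1) x(1)] by (simp add: H'_def)
      then have "is_minor K H'" using less.hyps[OF _ G' GK M'] by (simp add: H'_def)
      then show ?thesis using is_minor_step st by blast
    next
      case False
      then have DV2: "D = verts H" using DV by blast
      show ?thesis
      proof (cases "\<exists>f\<in>edges H. \<exists>p q. ends H f = {p, q} \<and> \<phi> p = \<phi> q")
        case True
        then obtain f p q where f: "f \<in> edges H" "ends H f = {p, q}" "\<phi> p = \<phi> q" by blast
        have pq: "p \<noteq> q" using G f by (auto simp: is_graph_def)
        have pqV: "p \<in> verts H" "q \<in> verts H" using G f by (auto simp: is_graph_def)
        have notpsi: "g \<notin> \<psi> ` edges K" if "ends H g = {p, q}" for g
          using psi_not_inside[OF M GK] that f(3) by blast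
        have nopar: "\<forall>g\<in>edges H. g \<noteq> f \<longrightarrow> ends H g \<noteq> ends H f"
        proof (intro ballI impI notI)
          fix g assume g: "g \<in> edges H" "g \<noteq> f" "ends H g = ends H f"
          have aa: "adj (del_e H g) = adj H"
          proof (intro ext iffI)
            fix a b assume "adj (del_e H g) a b" then show "adj H a b" by (auto simp: adj_def del_e_def)
          next
            fix a b assume "adj H a b"
            then obtain h where h: "h \<in> edges H" "ends H h = {a,b}" by (auto simp: adj_def)
            show "adj (del_e H g) a b"
            proof (cases "h = g")
              case True then show ?thesis using f(1) g h unfolding adj_def del_e_def
                by (intro bexI[of _ f]) auto
            next
              case False then show ?thesis using h unfolding adj_def del_e_def by auto
            qed
          qed
          have "model K (del_e H g) \<phi> D \<psi>"
            using M notpsi[of g] g f unfolding model_def conn_in_def aa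
            by (auto simp: del_e_def)
          then show False using nodel g notpsi[of g] f by auto
        qed
        define \<sigma> where "\<sigma> = (\<lambda>x::nat. if x = q then p else x)"
        define H' where "H' = \<lparr>verts = verts H - {q}, edges = edges H - {f},
              ends = (\<lambda>g. \<sigma> ` ends H g)\<rparr>"
        have phis: "\<phi> (\<sigma> z) = \<phi> z" for z using f(3) by (simp add: \<sigma>_def)
        have sV: "\<sigma> z \<in> verts H - {q}" if "z \<in> verts H" for z
          using that pq pqV by (auto simp: \<sigma>_def)
        have G': "is_graph H'"
          unfolding is_graph_def
        proof (intro conjI ballI)
          show "finite (verts H')" "finite (edges H')" using fin by (auto simp: H'_def)
          show "verts H' \<noteq> {}" using pqV pq by (auto simp: H'_def)
        next
          fix g assume g: "g \<in> edges H'"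
          then have g1: "g \<in> edges H" "g \<noteq> f" by (auto simp: H'_def)
          then show "ends H' g \<subseteq> verts H'" using G sV by (auto simp: H'_def is_graph_def)
          have "card (ends H g) = 2" using G g1 by (simp add: is_graph_def)
          then obtain a b where ab: "ends H g = {a, b}" "a \<noteq> b" by (meson card_2_iff)
          have "\<sigma> a \<noteq> \<sigma> b"
          proof
            assume "\<sigma> a = \<sigma> b"
            then have "{a, b} = {p, q}" using ab(2) by (auto simp: \<sigma>_def split: if_splits)
            then show False using nopar g1 ab f by auto
          qed
          then show "card (ends H' g) = 2" using ab by (simp add: H'_def)
        qed
        have st: "minor_step H H'"
        proof -
          have "\<exists>e\<in>edges H. \<exists>u v. ends H e = {u, v} \<and> u \<noteq> v \<and>
             (\<forall>f\<in>edges H. f \<noteq> e \<longrightarrow> ends H f \<noteq> ends H e) \<and>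
             H' = \<lparr>verts = verts H - {v}, edges = edges H - {e},
              ends = (\<lambda>f. (\<lambda>x. if x = v then u else x) ` ends H f)\<rparr>"
            using f(1,2) pq nopar unfolding H'_def \<sigma>_def by blast
          then show ?thesis unfolding minor_step_def using G G' by blast
        qed
        have M': "model K H' \<phi> (D - {q}) \<psi>"
          unfolding model_def
        proof (intro conjI ballI impI)
          show "D - {q} \<subseteq> verts H'" using DV by (auto simp: H'_def)
          have "\<phi> ` (D - {q}) = \<phi> ` D"
          proof
            show "\<phi> ` (D - {q}) \<subseteq> \<phi> ` D" by blast
            show "\<phi> ` D \<subseteq> \<phi> ` (D - {q})"
            proof
              fix w assume "w \<in> \<phi> ` D"
              then obtain z where z: "z \<in> D" "w = \<phi> z" by blast
              show "w \<in> \<phi> ` (D - {q})"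
              proof (cases "z = q")
                case True then have "w = \<phi> p" using z f(3) by simp
                moreover have "p \<in> D - {q}" using pqV pq DV2 by simp
                ultimately show ?thesis by blast
              next
                case False then show ?thesis using z by blast
              qed
            qed
          qed
          then show "\<phi> ` (D - {q}) = verts K" using M by (simp add: model_def)
          show "inj_on \<psi> (edges K)" using M by (simp add: model_def)
        next
          fix x y assume x: "x \<in> D - {q}" and y: "y \<in> D - {q}" and xy: "\<phi> x = \<phi> y"
          have c: "conn_in H {z \<in> D. \<phi> z = \<phi> x} x y" using M x y xy by (auto simp: model_def)
          have "conn_in H' {z \<in> D - {q}. \<phi> z = \<phi> x} (\<sigma> x) (\<sigma> y)"
          proof (rule conn_map[OF c])
            fix a b assume a: "a \<in> {z \<in> D. \<phi> z = \<phi> x}" and b: "b \<in> {z \<in> D. \<phi> z = \<phi> x}"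
              and ab: "adj H a b"
            then obtain g where g: "g \<in> edges H" "ends H g = {a, b}" by (auto simp: adj_def)
            have sab: "\<sigma> a \<in> {z \<in> D - {q}. \<phi> z = \<phi> x}" "\<sigma> b \<in> {z \<in> D - {q}. \<phi> z = \<phi> x}"
              using a b sV DV2 phis by auto
            show "conn_in H' {z \<in> D - {q}. \<phi> z = \<phi> x} (\<sigma> a) (\<sigma> b)"
            proof (cases "g = f")
              case True
              then have "{a, b} = {p, q}" using g f by simp
              then have "\<sigma> a = \<sigma> b" by (auto simp: \<sigma>_def doubleton_eq_iff)
              then show ?thesis by simp
            next
              case False
              then have "adj H' (\<sigma> a) (\<sigma> b)" using g by (auto simp: adj_def H'_def)
              then show ?thesis using sab by (simp add: conn_step)
            qed
          qed
          moreover have "\<sigma> x = x" "\<sigma> y = y" using x y by (auto simp: \<sigma>_def)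
          ultimately show "conn_in H' {z \<in> D - {q}. \<phi> z = \<phi> x} x y" by simp
        next
          fix e assume e: "e \<in> edges K"
          have ne: "\<psi> e \<noteq> f" using notpsi[of "\<psi> e"] f e by auto
          show "\<psi> e \<in> edges H'" using psiE[OF e] ne by (simp add: H'_def)
          show "\<phi> ` ends H' (\<psi> e) = ends K e" using psiE[OF e]
            by (simp add: H'_def image_comp comp_def phis)
          show "ends H' (\<psi> e) \<subseteq> D - {q}" using psiE[OF e] sV DV2 by (auto simp: H'_def)
        qed
        have "card (verts H') < card (verts H)" using card_Diff1_less[OF fin(1) pqV(2)] by (simp add: H'_def)
        moreover have "card (edges H') < card (edges H)" using card_Diff1_less[OF fin(2) f(1)] by (simp add: H'_def)
        ultimately have "is_minor K H'" using less.hyps[OF _ G' GK M'] by simp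
        then show ?thesis using is_minor_step st by blast
      next
        case noin: False
        have inj: "inj_on \<phi> (verts H)"
        proof (rule inj_onI, rule ccontr)
          fix x y assume x: "x \<in> verts H" and y: "y \<in> verts H" and xy: "\<phi> x = \<phi> y" "x \<noteq> y"
          have "conn_in H {z \<in> D. \<phi> z = \<phi> x} x y" using M x y xy DV2 by (auto simp: model_def)
          then obtain z where "adj H x z" "\<phi> z = \<phi> x"
            unfolding conn_in_def using xy(2) by (auto elim: converse_rtranclpE)
          then show False using noin by (auto simp: adj_def)
        qed
        have sur: "edges H \<subseteq> \<psi> ` edges K"
        proof
          fix f assume f: "f \<in> edges H"
          show "f \<in> \<psi> ` edges K"
          proof (rule ccontr)
            assume nf: "f \<notin> \<psi> ` edges K"
            have "model K (del_e H f) \<phi> D \<psi>"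
              unfolding model_def
            proof (intro conjI ballI impI)
              fix a b assume "a \<in> D" "b \<in> D" "\<phi> a = \<phi> b"
              then have "a = b" using inj DV2 by (auto simp: inj_on_def)
              then show "conn_in (del_e H f) {z \<in> D. \<phi> z = \<phi> a} a b" by simp
            next
              fix e assume e: "e \<in> edges K"
              show "\<psi> e \<in> edges (del_e H f)" using psiE[OF e] nf e by (auto simp: del_e_def)
            qed (use M psiE in \<open>auto simp: model_def del_e_def\<close>)
            then show False using nodel f nf by blast
          qed
        qed
        have bpsi: "bij_betw \<psi> (edges K) (edges H)"
          using M sur psiE by (auto simp: model_def bij_betw_def)
        have "graph_iso H K"
          unfolding graph_iso_def
        proof (intro exI conjI ballI)
          show "bij_betw \<phi> (verts H) (verts K)" using inj M DV2 by (simp add: bij_betw_def model_def)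
          show "bij_betw (inv_into (edges K) \<psi>) (edges H) (edges K)" using bpsi by (rule bij_betw_inv_into)
        next
          fix e assume e: "e \<in> edges H"
          let ?g = "inv_into (edges K) \<psi> e"
          have "?g \<in> edges K" "\<psi> ?g = e" using bpsi e
            by (auto simp: bij_betw_def inv_into_into f_inv_into_f)
          then show "ends K ?g = \<phi> ` ends H e" using psiE by metis
        qed
        then show ?thesis using G by (auto simp: is_minor_def)
      qed
    qed
  qed
qed

lemma path_len_card: "is_path H vs es \<Longrightarrow> length vs = card (set vs)"
  by (simp add: is_path_def distinct_card)

lemma path_set: "is_path H vs es \<Longrightarrow> set vs \<subseteq> verts H"
  by (simp add: is_path_def)

lemma path_len_le: "is_graph H \<Longrightarrow> is_path H vs es \<Longrightarrow> length vs \<le> card (verts H)"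
  using path_len_card path_set card_mono by (metis is_graph_def)

lemma usp_set_fin: "is_graph H \<Longrightarrow> finite {length vs | vs es. is_usp H vs es}"
proof -
  assume G: "is_graph H"
  have "{length vs | vs es. is_usp H vs es} \<subseteq> {..card (verts H)}"
    using path_len_le[OF G] by (auto simp: is_usp_def)
  then show ?thesis using finite_subset by blast
qed

lemma usp_single: "v \<in> verts H \<Longrightarrow> is_usp H [v] []"
proof -
  assume v: "v \<in> verts H"
  have 1: "length [v] \<le> length vs'" if "is_path H vs' es'" for vs' es'
    using that by (cases vs') auto
  have 2: "vs' = [v] \<and> es' = []" if "is_path H vs' es'" "hd vs' = v" "length vs' = 1" for vs' es'
    using that by (cases vs') auto
  show ?thesis unfolding is_usp_def is_uv_path_def using v 1 2 by auto
qed

lemma usp_ge: "is_graph H \<Longrightarrow> is_usp H vs es \<Longrightarrow> length vs \<le> usp H"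
  unfolding usp_def using usp_set_fin by (intro Max_ge) auto

lemma usp_obtain: "is_graph H \<Longrightarrow> \<exists>vs es. is_usp H vs es \<and> length vs = usp H"
proof -
  assume G: "is_graph H"
  then obtain v where "v \<in> verts H" by (auto simp: is_graph_def)
  then have ne: "{length vs | vs es. is_usp H vs es} \<noteq> {}" using usp_single by blast
  have "usp H \<in> {length vs | vs es. is_usp H vs es}"
    unfolding usp_def using Max_in[OF usp_set_fin[OF G] ne] .
  then show ?thesis by auto
qed

lemma minor_refl: "is_graph G \<Longrightarrow> is_minor G G"
  unfolding is_minor_def graph_iso_def
  by (intro conjI exI[of _ G] exI[of _ id]) (auto simp: bij_betw_def)

lemma sp_floor_le: "is_graph H \<Longrightarrow> is_minor K H \<Longrightarrow> sp_floor K \<le> sp H"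
  unfolding sp_floor_def by (rule Least_le) blast

lemma sp_floor_obtain: "is_graph K \<Longrightarrow> \<exists>H. is_graph H \<and> is_minor K H \<and> sp H = sp_floor K"
  unfolding sp_floor_def by (rule LeastI_ex) (use minor_refl in blast)

lemma is_graph_induced: "is_graph G \<Longrightarrow> V \<subseteq> verts G \<Longrightarrow> V \<noteq> {} \<Longrightarrow> is_graph (induced G V)"
  unfolding is_graph_def induced_def by (auto intro: finite_subset)

lemma path_from_induced: "is_path (induced G V) vs es \<Longrightarrow> V \<subseteq> verts G \<Longrightarrow> is_path G vs es"
  unfolding is_path_def induced_def by auto

lemma path_to_induced:
  assumes "is_path G vs es" "set vs \<subseteq> V"
  shows "is_path (induced G V) vs es"
proof -
  have "vs ! i \<in> V \<and> vs ! Suc i \<in> V" if "i < length es" for i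
    using assms that unfolding is_path_def by (metis Suc_less_eq nth_mem subsetD less_SucI)
  then show ?thesis using assms unfolding is_path_def induced_def by auto
qed

lemma usp_to_induced:
  assumes "is_usp G vs es" "set vs \<subseteq> V" "V \<subseteq> verts G"
  shows "is_usp (induced G V) vs es"
  using assms path_to_induced path_from_induced unfolding is_usp_def is_uv_path_def
  by meson

lemma induced_all: "is_graph G \<Longrightarrow> induced G (verts G) = G"
proof -
  assume "is_graph G"
  then have "{e \<in> edges G. ends G e \<subseteq> verts G} = edges G" by (auto simp: is_graph_def)
  then show ?thesis unfolding induced_def by simp
qed

lemma components_alt: "components G = (\<lambda>v. {w \<in> verts G. (adj G)\<^sup>*\<^sup>* v w}) ` verts G"
  unfolding components_def by auto

lemma components_finite: "is_graph G \<Longrightarrow> finite (components G)"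
  unfolding components_alt is_graph_def by simp

lemma comp_sub: "C \<in> components G \<Longrightarrow> C \<subseteq> verts G"
  unfolding components_def by auto

lemma comp_ne: "C \<in> components G \<Longrightarrow> C \<noteq> {}"
  unfolding components_def by auto

lemma adj_rtr_sym: "(adj G)\<^sup>*\<^sup>* x y \<Longrightarrow> (adj G)\<^sup>*\<^sup>* y x"
  by (induction rule: rtranclp_induct) (auto intro: converse_rtranclp_into_rtranclp adj_sym)

lemma comp_disj:
  assumes "C \<in> components G" "C' \<in> components G" "C \<noteq> C'"
  shows "C \<inter> C' = {}"
proof (rule ccontr)
  assume "C \<inter> C' \<noteq> {}"
  then obtain w where w: "w \<in> C" "w \<in> C'" by blast
  obtain v where v: "v \<in> verts G" "C = {w \<in> verts G. (adj G)\<^sup>*\<^sup>* v w}" using assms(1) by (auto simp: components_def)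
  obtain v' where v': "v' \<in> verts G" "C' = {w \<in> verts G. (adj G)\<^sup>*\<^sup>* v' w}" using assms(2) by (auto simp: components_def)
  have "(adj G)\<^sup>*\<^sup>* v w" "(adj G)\<^sup>*\<^sup>* v' w" using w v v' by auto
  then have "(adj G)\<^sup>*\<^sup>* v v'" "(adj G)\<^sup>*\<^sup>* v' v"
    by (meson adj_rtr_sym rtranclp_trans)+
  then have "C = C'" unfolding v v' by (auto intro: rtranclp_trans)
  then show False using assms(3) by simp
qed

lemma comp_union: "\<Union> (components G) = verts G"
  unfolding components_def by auto

lemma comp_closed:
  assumes "is_graph G" "C \<in> components G" "a \<in> C" "adj G a b"
  shows "b \<in> C"
proof -
  obtain v where v: "v \<in> verts G" "C = {w \<in> verts G. (adj G)\<^sup>*\<^sup>* v w}" using assms(2) by (auto simp: components_def)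
  have "b \<in> verts G" using assms(1,4) by (auto simp: adj_def is_graph_def)
  moreover have "(adj G)\<^sup>*\<^sup>* v b" using assms(3,4) v by (auto intro: rtranclp.rtrancl_into_rtrancl)
  ultimately show ?thesis using v by simp
qed

lemma ge_direction:
  assumes G: "is_graph G"
  shows "(\<Sum>C\<in>components G. sp_floor (induced G C)) \<le> sp_floor G"
proof -
  obtain H where H: "is_graph H" "is_minor G H" "sp H = sp_floor G"
    using sp_floor_obtain[OF G] by blast
  obtain \<phi> D \<psi> where M: "model G H \<phi> D \<psi>" using minor_model[OF H(2)] by blast
  obtain vs es where P: "is_usp H vs es" "length vs = usp H" using usp_obtain[OF H(1)] by blast
  have Pp: "is_path H vs es" using P by (simp add: is_usp_def)
  have finH: "finite (verts H)" using H by (simp add: is_graph_def)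
  have vsV: "set vs \<subseteq> verts H" using Pp by (simp add: is_path_def)
  have vsne: "set vs \<noteq> {}" using Pp by (cases vs) auto
  define S where "S = verts H - set vs"
  define A where "A C = {z \<in> D. \<phi> z \<in> C}" for C
  define V where "V C = verts H - (S - A C)" for C
  have DV: "D \<subseteq> verts H" and phiD: "\<phi> ` D = verts G" using M by (auto simp: model_def)
  have AV: "A C \<subseteq> verts H" for C using DV by (auto simp: A_def)
  have key: "sp_floor (induced G C) \<le> card (S \<inter> A C)" if C: "C \<in> components G" for C
  proof -
    have VV: "V C \<subseteq> verts H" unfolding V_def by blast
    have vsS: "set vs \<inter> S = {}" unfolding S_def by blast
    have vsVC: "set vs \<subseteq> V C" unfolding V_def using vsV vsS by blast
    have VCne: "V C \<noteq> {}" using vsVC vsne by (metis subset_empty)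
    have GI: "is_graph (induced H (V C))" using is_graph_induced[OF H(1) VV VCne] .
    have GC: "is_graph (induced G C)" using is_graph_induced[OF G comp_sub[OF C] comp_ne[OF C]] .
    have U: "is_usp (induced H (V C)) vs es" using usp_to_induced[OF P(1) vsVC VV] .
    have u: "length vs \<le> usp (induced H (V C))" using usp_ge[OF GI U] .
    have VC: "V C = set vs \<union> (S \<inter> A C)"
    proof (rule set_eqI)
      fix z show "z \<in> V C \<longleftrightarrow> z \<in> set vs \<union> (S \<inter> A C)"
        using AV[of C] vsV unfolding V_def S_def by auto
    qed
    have f1: "finite (S \<inter> A C)" using finH unfolding S_def by simp
    have d1: "set vs \<inter> (S \<inter> A C) = {}" using vsS by auto
    have "card (V C) = card (set vs) + card (S \<inter> A C)"
      unfolding VC by (rule card_Un_disjoint[OF finite_set f1 d1])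
    then have spI: "sp (induced H (V C)) \<le> card (S \<inter> A C)"
      using u path_len_card[OF Pp] by (simp add: sp_def induced_def)
    have MC: "model (induced G C) (induced H (V C)) \<phi> (A C) \<psi>"
      unfolding model_def
    proof (intro conjI ballI impI)
      show "A C \<subseteq> verts (induced H (V C))" using AV by (auto simp: induced_def V_def)
      show "\<phi> ` A C = verts (induced G C)"
      proof
        show "\<phi> ` A C \<subseteq> verts (induced G C)" by (auto simp: A_def induced_def)
        show "verts (induced G C) \<subseteq> \<phi> ` A C"
        proof
          fix c assume "c \<in> verts (induced G C)"
          then have c: "c \<in> C" by (simp add: induced_def)
          then have "c \<in> \<phi> ` D" using comp_sub[OF C] phiD by blast
          then obtain z where "z \<in> D" "\<phi> z = c" by blast
          then show "c \<in> \<phi> ` A C" using c by (auto simp: A_def)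
        qed
      qed
      show "inj_on \<psi> (edges (induced G C))" using M
        by (auto simp: model_def induced_def intro: inj_on_subset)
    next
      fix x y assume x: "x \<in> A C" and y: "y \<in> A C" and xy: "\<phi> x = \<phi> y"
      have c: "conn_in H {z \<in> D. \<phi> z = \<phi> x} x y" using M x y xy by (auto simp: model_def A_def)
      show "conn_in (induced H (V C)) {z \<in> A C. \<phi> z = \<phi> x} x y"
      proof (rule conn_mono[OF c])
        fix a b assume a: "a \<in> {z \<in> D. \<phi> z = \<phi> x}" and b: "b \<in> {z \<in> D. \<phi> z = \<phi> x}" and ab: "adj H a b"
        have ab': "a \<in> A C" "b \<in> A C" using a b x by (auto simp: A_def)
        then have "a \<in> V C" "b \<in> V C" using AV by (auto simp: V_def)
        then have "adj (induced H (V C)) a b" using ab by (auto simp: adj_def induced_def)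
        then show "a \<in> {z \<in> A C. \<phi> z = \<phi> x} \<and> b \<in> {z \<in> A C. \<phi> z = \<phi> x} \<and> adj (induced H (V C)) a b"
          using ab' a b by auto
      qed
    next
      fix e assume e: "e \<in> edges (induced G C)"
      then have e1: "e \<in> edges G" "ends G e \<subseteq> C" by (auto simp: induced_def)
      have m: "\<psi> e \<in> edges H" "\<phi> ` ends H (\<psi> e) = ends G e" "ends H (\<psi> e) \<subseteq> D"
        using M e1(1) by (auto simp: model_def)
      have sub: "ends H (\<psi> e) \<subseteq> A C" using m e1(2) by (auto simp: A_def)
      then have "ends H (\<psi> e) \<subseteq> V C" using AV by (auto simp: V_def)
      then show "\<psi> e \<in> edges (induced H (V C))" using m by (auto simp: induced_def)
      show "\<phi> ` ends (induced H (V C)) (\<psi> e) = ends (induced G C) e" using m by (simp add: induced_def)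
      show "ends (induced H (V C)) (\<psi> e) \<subseteq> A C" using sub by (simp add: induced_def)
    qed
    have "is_minor (induced G C) (induced H (V C))" using model_minor[OF GI GC MC] .
    then have "sp_floor (induced G C) \<le> sp (induced H (V C))" using sp_floor_le[OF GI] by blast
    then show ?thesis using spI by linarith
  qed
  have "(\<Sum>C\<in>components G. sp_floor (induced G C)) \<le> (\<Sum>C\<in>components G. card (S \<inter> A C))"
    using key by (rule sum_mono)
  also have "\<dots> = card (\<Union>C\<in>components G. S \<inter> A C)"
  proof (rule card_UN_disjoint[symmetric])
    show "finite (components G)" using components_finite[OF G] .
    show "\<forall>C\<in>components G. finite (S \<inter> A C)" using finH by (auto simp: S_def)
    show "\<forall>C\<in>components G. \<forall>C'\<in>components G. C \<noteq> C' \<longrightarrow> S \<inter> A C \<inter> (S \<inter> A C') = {}"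
    proof (intro ballI impI)
      fix C C' assume "C \<in> components G" "C' \<in> components G" "C \<noteq> C'"
      then have "C \<inter> C' = {}" by (rule comp_disj)
      then show "S \<inter> A C \<inter> (S \<inter> A C') = {}" unfolding A_def by auto
    qed
  qed
  also have "\<dots> \<le> card S" by (rule card_mono) (use finH in \<open>auto simp: S_def\<close>)
  also have "card S = sp H"
    using P(2) path_len_card[OF Pp] vsV finH by (simp add: S_def sp_def card_Diff_subset)
  finally show ?thesis using H(3) by simp
qed

lemma path_map:
  assumes P: "is_path H vs es" and inj: "inj_on f (set vs)" and fV: "f ` set vs \<subseteq> verts H'"
    and ge: "\<And>e. e \<in> set es \<Longrightarrow> g e \<in> edges H' \<and> ends H' (g e) = f ` ends H e"
  shows "is_path H' (map f vs) (map g es)"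
  unfolding is_path_def
proof (intro conjI allI impI)
  show "length (map f vs) = Suc (length (map g es))" using P by (simp add: is_path_def)
  show "distinct (map f vs)" using P inj by (simp add: is_path_def distinct_map)
  show "set (map f vs) \<subseteq> verts H'" using fV by simp
next
  fix i assume i: "i < length (map g es)"
  then have i1: "i < length es" "Suc i < length vs" using P by (auto simp: is_path_def)
  have e: "es ! i \<in> edges H" "ends H (es ! i) = {vs ! i, vs ! Suc i}" using P i1 by (auto simp: is_path_def)
  have "es ! i \<in> set es" using i1 by simp
  then have "g (es ! i) \<in> edges H' \<and> ends H' (g (es ! i)) = f ` ends H (es ! i)" using ge by blast
  then show "map g es ! i \<in> edges H'" "ends H' (map g es ! i) = {map f vs ! i, map f vs ! Suc i}"
    using e i1 by auto
qed

lemma is_path_bridge: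
  assumes "is_path H A ea" "is_path H B eb" "set A \<inter> set B = {}" "b \<in> edges H"
    "ends H b = {last A, hd B}"
  shows "is_path H (A @ B) (ea @ b # eb)"
  using assms
proof (induction A arbitrary: ea rule: induct_list012)
  case 1 then show ?case by simp
next
  case (2 x)
  then have ea: "ea = []" and x: "x \<in> verts H" by auto
  obtain y B' where B: "B = y # B'" using 2 by (cases B) auto
  show ?case using 2 ea x B by (simp add: is_path_Cons2)
next
  case (3 x y zs)
  from "3.prems"(1) obtain e ea' where ea: "ea = e # ea'" "e \<in> edges H" "ends H e = {x, y}"
    "x \<in> verts H" "x \<notin> set (y # zs)" "is_path H (y # zs) ea'"
    by (auto simp: is_path_Cons2)
  have IH: "is_path H ((y # zs) @ B) (ea' @ b # eb)"
    using "3.IH"(2)[OF ea(6) "3.prems"(2)] "3.prems"(3-5) by auto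
  show ?case using IH ea "3.prems"(3) by (simp add: is_path_Cons2)
qed

definition join :: "mgraph \<Rightarrow> mgraph \<Rightarrow> nat \<Rightarrow> nat \<Rightarrow> mgraph" where
  "join H1 H2 a b = \<lparr>verts = (\<lambda>x. 2*x) ` verts H1 \<union> (\<lambda>x. Suc (2*x)) ` verts H2,
     edges = (\<lambda>e. 3*e) ` edges H1 \<union> (\<lambda>e. Suc (3*e)) ` edges H2 \<union> {2},
     ends = (\<lambda>e. if e = 2 then {2*a, Suc (2*b)} else if e mod 3 = 0 then (\<lambda>x. 2*x) ` ends H1 (e div 3)
                 else (\<lambda>x. Suc (2*x)) ` ends H2 (e div 3))\<rparr>"

lemma join_ends1[simp]: "ends (join H1 H2 a b) (3*e) = (\<lambda>x. 2*x) ` ends H1 e"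
proof -
  have "3*e \<noteq> (2::nat)" by presburger
  then show ?thesis by (simp add: join_def)
qed

lemma join_ends2[simp]: "ends (join H1 H2 a b) (Suc (3*e)) = (\<lambda>x. Suc (2*x)) ` ends H2 e"
proof -
  have "Suc (3*e) \<noteq> (2::nat)" "Suc (3*e) mod 3 \<noteq> 0" "Suc (3*e) div 3 = e" by presburger+
  then show ?thesis by (simp add: join_def)
qed

lemma join_ends_bridge[simp]: "ends (join H1 H2 a b) 2 = {2*a, Suc (2*b)}"
  by (simp add: join_def)

lemma join_verts[simp]: "verts (join H1 H2 a b) = (\<lambda>x. 2*x) ` verts H1 \<union> (\<lambda>x. Suc (2*x)) ` verts H2"
  by (simp add: join_def)

lemma join_edges[simp]: "edges (join H1 H2 a b) = (\<lambda>e. 3*e) ` edges H1 \<union> (\<lambda>e. Suc (3*e)) ` edges H2 \<union> {2}"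
  by (simp add: join_def)

lemma inj_double: "inj_on (\<lambda>x::nat. 2*x) A" by (simp add: inj_on_def)
lemma inj_double1: "inj_on (\<lambda>x::nat. Suc (2*x)) A" by (simp add: inj_on_def)

lemma join_edge_ok:
  assumes G1: "is_graph H1" and G2: "is_graph H2" and a: "a \<in> verts H1" and b: "b \<in> verts H2"
    and e: "e \<in> edges (join H1 H2 a b)"
  shows "ends (join H1 H2 a b) e \<subseteq> verts (join H1 H2 a b) \<and> card (ends (join H1 H2 a b) e) = 2"
proof -
  consider (1) g where "e = 3*g" "g \<in> edges H1" | (2) g where "e = Suc (3*g)" "g \<in> edges H2" | (3) "e = 2"
    using e by auto
  then show ?thesis
  proof cases
    case 1
    have "ends H1 g \<subseteq> verts H1" "card (ends H1 g) = 2" using G1 1 by (auto simp: is_graph_def)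
    then show ?thesis using 1 card_image[OF inj_double] by auto
  next
    case 2
    have "ends H2 g \<subseteq> verts H2" "card (ends H2 g) = 2" using G2 2 by (auto simp: is_graph_def)
    then show ?thesis using 2 card_image[OF inj_double1] by auto
  next
    case 3
    have "2*a \<noteq> Suc (2*b)" by presburger
    then show ?thesis using 3 a b by auto
  qed
qed

lemma join_graph:
  assumes G1: "is_graph H1" and G2: "is_graph H2" and a: "a \<in> verts H1" and b: "b \<in> verts H2"
  shows "is_graph (join H1 H2 a b)"
proof -
  have "finite (verts (join H1 H2 a b))" "finite (edges (join H1 H2 a b))"
    using G1 G2 by (auto simp: is_graph_def)
  moreover have "verts (join H1 H2 a b) \<noteq> {}" using a by auto
  ultimately show ?thesis unfolding is_graph_def using join_edge_ok[OF assms] by blast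
qed

lemma join_card:
  assumes "is_graph H1" "is_graph H2"
  shows "card (verts (join H1 H2 a b)) = card (verts H1) + card (verts H2)"
proof -
  have f: "finite (verts H1)" "finite (verts H2)" using assms by (auto simp: is_graph_def)
  have d: "(\<lambda>x. 2*x) ` verts H1 \<inter> (\<lambda>x. Suc (2*x)) ` verts H2 = {}" by auto presburger
  show ?thesis using card_Un_disjoint[OF finite_imageI[OF f(1)] finite_imageI[OF f(2)] d]
    card_image[OF inj_double] card_image[OF inj_double1] by simp
qed

lemma join_edge_cases:
  assumes "e \<in> edges (join H1 H2 a b)"
  obtains (1) g where "e = 3*g" "g \<in> edges H1" | (2) g where "e = Suc (3*g)" "g \<in> edges H2" | (3) "e = 2"
  using assms by auto

lemma div2_double_img: "(\<lambda>x::nat. x div 2) ` (\<lambda>x. 2*x) ` X = X"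
  by (simp add: image_comp comp_def)

lemma div2_double1_img: "(\<lambda>x::nat. x div 2) ` (\<lambda>x. Suc (2*x)) ` X = X"
  by (simp add: image_comp comp_def)

lemma edge_even:
  assumes e: "e \<in> edges (join H1 H2 a b)" and xy: "ends (join H1 H2 a b) e = {x, y}"
    and ev: "even x" "even y"
  shows "e = 3*(e div 3) \<and> e div 3 \<in> edges H1 \<and> ends H1 (e div 3) = (\<lambda>x. x div 2) ` ends (join H1 H2 a b) e"
  using e
proof (cases rule: join_edge_cases)
  case (1 g) then show ?thesis by (simp add: div2_double_img)
next
  case (2 g)
  then have "x \<in> (\<lambda>x. Suc (2*x)) ` ends H2 g" using xy by simp
  then show ?thesis using ev by auto
next
  case 3
  then have "{2*a, Suc (2*b)} = {x, y}" using xy by simp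
  then have "Suc (2*b) = x \<or> Suc (2*b) = y" by (metis doubleton_eq_iff)
  then show ?thesis using ev by auto
qed

lemma edge_odd:
  assumes e: "e \<in> edges (join H1 H2 a b)" and xy: "ends (join H1 H2 a b) e = {x, y}"
    and od: "odd x" "odd y"
  shows "e = Suc (3*(e div 3)) \<and> e div 3 \<in> edges H2 \<and> ends H2 (e div 3) = (\<lambda>x. x div 2) ` ends (join H1 H2 a b) e"
  using e
proof (cases rule: join_edge_cases)
  case (1 g)
  then have "x \<in> (\<lambda>x. 2*x) ` ends H1 g" using xy by simp
  then show ?thesis using od by auto
next
  case (2 g)
  have "Suc (3*g) div 3 = g" by presburger
  then show ?thesis using 2 by (simp add: div2_double1_img)
next
  case 3
  then have "{2*a, Suc (2*b)} = {x, y}" using xy by simp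
  then have "2*a = x \<or> 2*a = y" by (metis doubleton_eq_iff)
  then show ?thesis using od by auto
qed

lemma edge_cross:
  assumes e: "e \<in> edges (join H1 H2 a b)" and xy: "ends (join H1 H2 a b) e = {x, y}"
    and ev: "even x" "odd y"
  shows "e = 2 \<and> x = 2*a \<and> y = Suc (2*b)"
  using e
proof (cases rule: join_edge_cases)
  case (1 g)
  then have "y \<in> (\<lambda>x. 2*x) ` ends H1 g" using xy by simp
  then show ?thesis using ev by auto
next
  case (2 g)
  then have "x \<in> (\<lambda>x. Suc (2*x)) ` ends H2 g" using xy by simp
  then show ?thesis using ev by auto
next
  case 3
  then have "{2*a, Suc (2*b)} = {x, y}" using xy by simp
  then show ?thesis using ev 3 by (auto simp: doubleton_eq_iff)
qed

lemma path_edge_in_set: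
  assumes "is_path H vs es" "e \<in> set es"
  shows "e \<in> edges H \<and> (\<exists>x y. ends H e = {x, y} \<and> x \<in> set vs \<and> y \<in> set vs)"
proof -
  obtain i where i: "i < length es" "es ! i = e" using assms(2) by (metis in_set_conv_nth)
  then have si: "Suc i < length vs" using assms(1) by (simp add: is_path_def)
  have "es!i \<in> edges H" "ends H (es!i) = {vs!i, vs!Suc i}" using assms(1) i by (auto simp: is_path_def)
  moreover have "vs!i \<in> set vs" "vs!Suc i \<in> set vs" using si by auto
  ultimately show ?thesis using i(2) by blast
qed

lemma decode_even:
  assumes P: "is_path (join H1 H2 a b) vs es" and ev: "\<forall>x\<in>set vs. even x"
  shows "is_path H1 (map (\<lambda>x. x div 2) vs) (map (\<lambda>e. e div 3) es) \<and>
    map (\<lambda>x. 2*x) (map (\<lambda>x. x div 2) vs) = vs \<and> map (\<lambda>e. 3*e) (map (\<lambda>e. e div 3) es) = es"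
proof (intro conjI)
  have E: "e = 3*(e div 3) \<and> e div 3 \<in> edges H1 \<and> ends H1 (e div 3) = (\<lambda>x. x div 2) ` ends (join H1 H2 a b) e"
    if ese: "e \<in> set es" for e
  proof -
    obtain x y where "e \<in> edges (join H1 H2 a b)" "ends (join H1 H2 a b) e = {x, y}" "x \<in> set vs" "y \<in> set vs"
      using path_edge_in_set[OF P ese] by blast
    then show ?thesis using edge_even ev by blast
  qed
  show "is_path H1 (map (\<lambda>x. x div 2) vs) (map (\<lambda>e. e div 3) es)"
  proof (rule path_map[OF P])
    show "inj_on (\<lambda>x. x div 2) (set vs)"
    proof (rule inj_onI)
      fix x y assume "x \<in> set vs" "y \<in> set vs" "x div 2 = y div 2"
      then show "x = y" using ev dvd_mult_div_cancel[of 2 x] dvd_mult_div_cancel[of 2 y] by metis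
    qed
    show "(\<lambda>x. x div 2) ` set vs \<subseteq> verts H1"
    proof
      fix z assume "z \<in> (\<lambda>x. x div 2) ` set vs"
      then obtain x where x: "x \<in> set vs" "z = x div 2" by blast
      then have "x \<in> verts (join H1 H2 a b)" using P by (auto simp: is_path_def)
      then show "z \<in> verts H1" using x ev by auto
    qed
    show "\<And>e. e \<in> set es \<Longrightarrow> e div 3 \<in> edges H1 \<and> ends H1 (e div 3) = (\<lambda>x. x div 2) ` ends (join H1 H2 a b) e"
      using E by blast
  qed
  show "map (\<lambda>x. 2*x) (map (\<lambda>x. x div 2) vs) = vs" using ev by (auto intro: map_idI)
  show "map (\<lambda>e. 3*e) (map (\<lambda>e. e div 3) es) = es" using E by (auto intro: map_idI)
qed

lemma decode_odd:
  assumes P: "is_path (join H1 H2 a b) vs es" and od: "\<forall>x\<in>set vs. odd x"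
  shows "is_path H2 (map (\<lambda>x. x div 2) vs) (map (\<lambda>e. e div 3) es) \<and>
    map (\<lambda>x. Suc (2*x)) (map (\<lambda>x. x div 2) vs) = vs \<and> map (\<lambda>e. Suc (3*e)) (map (\<lambda>e. e div 3) es) = es"
proof (intro conjI)
  have E: "e = Suc (3*(e div 3)) \<and> e div 3 \<in> edges H2 \<and> ends H2 (e div 3) = (\<lambda>x. x div 2) ` ends (join H1 H2 a b) e"
    if ese: "e \<in> set es" for e
  proof -
    obtain x y where "e \<in> edges (join H1 H2 a b)" "ends (join H1 H2 a b) e = {x, y}" "x \<in> set vs" "y \<in> set vs"
      using path_edge_in_set[OF P ese] by blast
    then show ?thesis using edge_odd od by blast
  qed
  show "is_path H2 (map (\<lambda>x. x div 2) vs) (map (\<lambda>e. e div 3) es)"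
  proof (rule path_map[OF P])
    show "inj_on (\<lambda>x. x div 2) (set vs)"
    proof (rule inj_onI)
      fix x y assume "x \<in> set vs" "y \<in> set vs" "x div 2 = y div 2"
      then show "x = y" using od odd_two_times_div_two_succ[of x] odd_two_times_div_two_succ[of y] by metis
    qed
    show "(\<lambda>x. x div 2) ` set vs \<subseteq> verts H2"
    proof
      fix z assume "z \<in> (\<lambda>x. x div 2) ` set vs"
      then obtain x where x: "x \<in> set vs" "z = x div 2" by blast
      then have "x \<in> verts (join H1 H2 a b)" using P by (auto simp: is_path_def)
      then show "z \<in> verts H2" using x od by auto
    qed
    show "\<And>e. e \<in> set es \<Longrightarrow> e div 3 \<in> edges H2 \<and> ends H2 (e div 3) = (\<lambda>x. x div 2) ` ends (join H1 H2 a b) e"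
      using E by blast
  qed
  show "map (\<lambda>x. Suc (2*x)) (map (\<lambda>x. x div 2) vs) = vs" using od by (auto intro: map_idI elim!: oddE)
  show "map (\<lambda>e. Suc (3*e)) (map (\<lambda>e. e div 3) es) = es" using E by (auto intro: map_idI)
qed

lemma all_odd:
  assumes "is_path (join H1 H2 a b) vs es" "odd (hd vs)" "2*a \<notin> set vs"
  shows "\<forall>x\<in>set vs. odd x"
  using assms
proof (induction vs arbitrary: es rule: induct_list012)
  case 1 then show ?case by simp
next
  case (2 x) then show ?case by simp
next
  case (3 x y zs)
  from "3.prems"(1) obtain e es' where e: "e \<in> edges (join H1 H2 a b)" "ends (join H1 H2 a b) e = {x, y}"
    "is_path (join H1 H2 a b) (y # zs) es'"
    by (auto simp: is_path_Cons2)
  have ox: "odd x" using "3.prems"(2) by simp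
  have oy: "odd y"
  proof (rule ccontr)
    assume "\<not> odd y"
    then have "y = 2*a" using edge_cross[OF e(1) _ _ ox, of y] e(2) by (simp add: insert_commute)
    then show False using "3.prems"(3) by simp
  qed
  have "\<forall>x\<in>set (y # zs). odd x" using "3.IH"(2)[OF e(3)] oy "3.prems"(3) by simp
  then show ?case using ox by simp
qed

lemma decompose:
  assumes "is_path (join H1 H2 a b) vs es" "even (hd vs)" "odd (last vs)"
  shows "\<exists>A B ea eb. vs = A @ B \<and> es = ea @ 2 # eb \<and> is_path (join H1 H2 a b) A ea \<and>
     is_path (join H1 H2 a b) B eb \<and> (\<forall>x\<in>set A. even x) \<and> (\<forall>x\<in>set B. odd x) \<and>
     last A = 2*a \<and> hd B = Suc (2*b)"
  using assms
proof (induction vs arbitrary: es rule: induct_list012)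
  case 1 then show ?case by simp
next
  case (2 x) then show ?case by simp
next
  case (3 x y zs)
  let ?J = "join H1 H2 a b"
  from "3.prems"(1) obtain e es' where e: "es = e # es'" "e \<in> edges ?J" "ends ?J e = {x, y}"
    "x \<in> verts ?J" "x \<notin> set (y # zs)" "is_path ?J (y # zs) es'"
    by (auto simp: is_path_Cons2)
  have ex: "even x" using "3.prems"(2) by simp
  show ?case
  proof (cases "odd y")
    case True
    have c: "e = 2 \<and> x = 2*a \<and> y = Suc (2*b)" using edge_cross[OF e(2,3) ex True] .
    have "\<forall>x\<in>set (y # zs). odd x" using all_odd[OF e(6)] True c e(5) by simp
    then show ?thesis using e c ex
      by (intro exI[of _ "[x]"] exI[of _ "y # zs"] exI[of _ "[]"] exI[of _ es']) simp
  next
    case False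
    then have ey: "even y" by simp
    obtain A B ea eb where IH: "y # zs = A @ B" "es' = ea @ 2 # eb" "is_path ?J A ea"
      "is_path ?J B eb" "\<forall>x\<in>set A. even x" "\<forall>x\<in>set B. odd x" "last A = 2*a" "hd B = Suc (2*b)"
      using "3.IH"(2)[OF e(6)] ey "3.prems"(3) by auto
    obtain A' where A: "A = y # A'"
      using IH(1,3) by (cases A) auto
    have xA: "x \<notin> set A" using e(5) IH(1) by auto
    have "is_path ?J (x # A) (e # ea)"
      unfolding A using IH(3) e xA A by (simp add: is_path_Cons2)
    then show ?thesis using IH e ex A
      by (intro exI[of _ "x # A"] exI[of _ B] exI[of _ "e # ea"] exI[of _ eb]) simp
  qed
qed

lemma join_usp:
  assumes U1: "is_usp H1 vs1 es1" and U2: "is_usp H2 vs2 es2"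
  shows "is_usp (join H1 H2 (last vs1) (hd vs2))
           (map (\<lambda>x. 2*x) vs1 @ map (\<lambda>x. Suc (2*x)) vs2)
           (map (\<lambda>e. 3*e) es1 @ 2 # map (\<lambda>e. Suc (3*e)) es2)"
proof -
  let ?J = "join H1 H2 (last vs1) (hd vs2)"
  let ?VS = "map (\<lambda>x. 2*x) vs1 @ map (\<lambda>x. Suc (2*x)) vs2"
  let ?ES = "map (\<lambda>e. 3*e) es1 @ 2 # map (\<lambda>e. Suc (3*e)) es2"
  have P1: "is_path H1 vs1 es1" and P2: "is_path H2 vs2 es2" using U1 U2 by (auto simp: is_usp_def)
  have ne1: "vs1 \<noteq> []" and ne2: "vs2 \<noteq> []" using P1 P2 by (auto simp: is_path_def)
  have Q1: "is_path ?J (map (\<lambda>x. 2*x) vs1) (map (\<lambda>e. 3*e) es1)"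
  proof (rule path_map[OF P1 inj_double])
    show "(\<lambda>x. 2*x) ` set vs1 \<subseteq> verts ?J" using P1 by (auto simp: is_path_def)
    show "3*e \<in> edges ?J \<and> ends ?J (3*e) = (\<lambda>x. 2*x) ` ends H1 e" if "e \<in> set es1" for e
      using path_edge_in_set[OF P1 that] by simp
  qed
  have Q2: "is_path ?J (map (\<lambda>x. Suc (2*x)) vs2) (map (\<lambda>e. Suc (3*e)) es2)"
  proof (rule path_map[OF P2 inj_double1])
    show "(\<lambda>x. Suc (2*x)) ` set vs2 \<subseteq> verts ?J" using P2 by (auto simp: is_path_def)
    show "Suc (3*e) \<in> edges ?J \<and> ends ?J (Suc (3*e)) = (\<lambda>x. Suc (2*x)) ` ends H2 e" if "e \<in> set es2" for e
      using path_edge_in_set[OF P2 that] by simp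
  qed
  have np: "\<And>x y::nat. 2*x \<noteq> Suc (2*y)" by presburger
  have disj: "set (map (\<lambda>x. 2*x) vs1) \<inter> set (map (\<lambda>x. Suc (2*x)) vs2) = {}" using np by auto
  have br: "ends ?J 2 = {last (map (\<lambda>x. 2*x) vs1), hd (map (\<lambda>x. Suc (2*x)) vs2)}"
    using ne1 ne2 by (simp add: last_map hd_map)
  have QP: "is_path ?J ?VS ?ES" by (rule is_path_bridge[OF Q1 Q2 disj _ br]) simp
  have hdVS: "hd ?VS = 2 * hd vs1" using ne1 by (simp add: hd_map)
  have lastVS: "last ?VS = Suc (2 * last vs2)" using ne2 by (simp add: last_map)
  have main: "length ?VS \<le> length vs' \<and> (length vs' = length ?VS \<longrightarrow> vs' = ?VS \<and> es' = ?ES)"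
    if P: "is_path ?J vs' es'" and h: "hd vs' = hd ?VS" and l: "last vs' = last ?VS" for vs' es'
  proof -
    have "even (hd vs')" "odd (last vs')" using h l hdVS lastVS by auto
    note ho = this
    obtain A B ea eb where D: "vs' = A @ B" "es' = ea @ 2 # eb" "is_path ?J A ea"
      "is_path ?J B eb" "\<forall>x\<in>set A. even x" "\<forall>x\<in>set B. odd x" "last A = 2 * last vs1"
      "hd B = Suc (2 * hd vs2)"
      by (insert decompose[OF P ho]) (elim exE conjE, rule that, assumption+)
    have neA: "A \<noteq> []" and neB: "B \<noteq> []" using D(3,4) by (auto simp: is_path_def)
    define A1 where "A1 = map (\<lambda>x. x div 2) A"
    define ea1 where "ea1 = map (\<lambda>e. e div 3) ea"
    define B1 where "B1 = map (\<lambda>x. x div 2) B"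
    define eb1 where "eb1 = map (\<lambda>e. e div 3) eb"
    have dA: "is_path H1 A1 ea1" "map (\<lambda>x. 2*x) A1 = A" "map (\<lambda>e. 3*e) ea1 = ea"
      using decode_even[OF D(3,5)] unfolding A1_def ea1_def by auto
    have dB: "is_path H2 B1 eb1" "map (\<lambda>x. Suc (2*x)) B1 = B" "map (\<lambda>e. Suc (3*e)) eb1 = eb"
      using decode_odd[OF D(4,6)] unfolding B1_def eb1_def by auto
    have hA: "hd A = 2 * hd vs1" using h hdVS D(1) neA by simp
    have hA1: "hd A1 = hd vs1" using hA neA by (simp add: A1_def hd_map)
    have lA1: "last A1 = last vs1" using D(7) neA by (simp add: A1_def last_map)
    have hB1: "hd B1 = hd vs2" using D(8) neB by (simp add: B1_def hd_map)
    have lB: "last B = Suc (2 * last vs2)" using l lastVS D(1) neB by simp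
    have lB1: "last B1 = last vs2" using lB neB by (simp add: B1_def last_map)
    have uv1: "is_uv_path H1 (hd vs1) (last vs1) A1 ea1" using dA(1) hA1 lA1 by (simp add: is_uv_path_def)
    have uv2: "is_uv_path H2 (hd vs2) (last vs2) B1 eb1" using dB(1) hB1 lB1 by (simp add: is_uv_path_def)
    have le1: "length vs1 \<le> length A1" using U1 uv1 unfolding is_usp_def by blast
    have le2: "length vs2 \<le> length B1" using U2 uv2 unfolding is_usp_def by blast
    have lens: "length vs' = length A1 + length B1" using D(1) by (simp add: A1_def B1_def)
    have "length ?VS \<le> length vs'" using le1 le2 lens by simp
    moreover have "vs' = ?VS \<and> es' = ?ES" if eq: "length vs' = length ?VS"
    proof -
      have L: "length A1 = length vs1" "length B1 = length vs2" using eq le1 le2 lens by auto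
      have E1: "A1 = vs1 \<and> ea1 = es1" using U1 uv1 L(1) unfolding is_usp_def by blast
      have E2: "B1 = vs2 \<and> eb1 = es2" using U2 uv2 L(2) unfolding is_usp_def by blast
      have "A = map (\<lambda>x. 2*x) vs1" "ea = map (\<lambda>e. 3*e) es1" using dA(2,3) E1 by auto
      moreover have "B = map (\<lambda>x. Suc (2*x)) vs2" "eb = map (\<lambda>e. Suc (3*e)) es2" using dB(2,3) E2 by auto
      ultimately show ?thesis using D(1,2) by simp
    qed
    ultimately show ?thesis by blast
  qed
  have s1: "\<forall>vs' es'. is_uv_path ?J (hd ?VS) (last ?VS) vs' es' \<longrightarrow> length ?VS \<le> length vs'"
    using main unfolding is_uv_path_def by blast
  have s2: "\<forall>vs' es'. is_uv_path ?J (hd ?VS) (last ?VS) vs' es' \<and> length vs' = length ?VS \<longrightarrow>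
      vs' = ?VS \<and> es' = ?ES"
    using main unfolding is_uv_path_def by blast
  show ?thesis unfolding is_usp_def using QP s1 s2 by blast
qed

lemma le_binary:
  assumes G: "is_graph G" and W1: "W1 \<subseteq> verts G" "W1 \<noteq> {}" and W2: "W2 \<subseteq> verts G" "W2 \<noteq> {}"
    and dW: "W1 \<inter> W2 = {}"
    and sep: "\<And>e. e \<in> edges G \<Longrightarrow> ends G e \<subseteq> W1 \<union> W2 \<Longrightarrow> ends G e \<subseteq> W1 \<or> ends G e \<subseteq> W2"
  shows "sp_floor (induced G (W1 \<union> W2)) \<le> sp_floor (induced G W1) + sp_floor (induced G W2)"
proof -
  define K where "K = induced G (W1 \<union> W2)"
  define K1 where "K1 = induced G W1"
  define K2 where "K2 = induced G W2"
  have GK: "is_graph K" unfolding K_def by (rule is_graph_induced[OF G]) (use W1 W2 in auto)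
  have GK1: "is_graph K1" unfolding K1_def by (rule is_graph_induced[OF G W1])
  have GK2: "is_graph K2" unfolding K2_def by (rule is_graph_induced[OF G W2])
  obtain H1 where H1: "is_graph H1" "is_minor K1 H1" "sp H1 = sp_floor K1" using sp_floor_obtain[OF GK1] by blast
  obtain H2 where H2: "is_graph H2" "is_minor K2 H2" "sp H2 = sp_floor K2" using sp_floor_obtain[OF GK2] by blast
  obtain \<phi>1 D1 \<psi>1 where M1: "model K1 H1 \<phi>1 D1 \<psi>1" using minor_model[OF H1(2)] by blast
  obtain \<phi>2 D2 \<psi>2 where M2: "model K2 H2 \<phi>2 D2 \<psi>2" using minor_model[OF H2(2)] by blast
  obtain vs1 es1 where U1: "is_usp H1 vs1 es1" "length vs1 = usp H1" using usp_obtain[OF H1(1)] by blast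
  obtain vs2 es2 where U2: "is_usp H2 vs2 es2" "length vs2 = usp H2" using usp_obtain[OF H2(1)] by blast
  have P1: "is_path H1 vs1 es1" and P2: "is_path H2 vs2 es2" using U1 U2 by (auto simp: is_usp_def)
  have ne1: "vs1 \<noteq> []" and ne2: "vs2 \<noteq> []" using P1 P2 by (auto simp: is_path_def)
  have av: "last vs1 \<in> verts H1" using P1 ne1 by (auto simp: is_path_def)
  have bv: "hd vs2 \<in> verts H2" using P2 ne2 by (auto simp: is_path_def)
  define J where "J = join H1 H2 (last vs1) (hd vs2)"
  have GJ: "is_graph J" unfolding J_def by (rule join_graph[OF H1(1) H2(1) av bv])
  have UJ: "length vs1 + length vs2 \<le> usp J"
    using usp_ge[OF GJ join_usp[OF U1(1) U2(1), folded J_def]] by simp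
  have cJ: "card (verts J) = card (verts H1) + card (verts H2)" unfolding J_def by (rule join_card[OF H1(1) H2(1)])
  have l1: "length vs1 \<le> card (verts H1)" using path_len_le[OF H1(1) P1] .
  have l2: "length vs2 \<le> card (verts H2)" using path_len_le[OF H2(1) P2] .
  have spJ: "sp J \<le> sp H1 + sp H2"
    using UJ cJ l1 l2 U1(2) U2(2) unfolding sp_def by linarith
  define \<phi> where "\<phi> z = (if even z then \<phi>1 (z div 2) else \<phi>2 (z div 2))" for z :: nat
  define D where "D = (\<lambda>x. 2*x) ` D1 \<union> (\<lambda>x. Suc (2*x)) ` D2"
  define \<psi> where "\<psi> e = (if ends G e \<subseteq> W1 then 3 * \<psi>1 e else Suc (3 * \<psi>2 e))" for e
  have phi_e[simp]: "\<phi> (2*x) = \<phi>1 x" for x by (simp add: \<phi>_def)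
  have phi_o[simp]: "\<phi> (Suc (2*x)) = \<phi>2 x" for x by (simp add: \<phi>_def)
  have m1: "D1 \<subseteq> verts H1" "\<phi>1 ` D1 = W1" "inj_on \<psi>1 (edges K1)"
    using M1 by (auto simp: model_def K1_def induced_def)
  have m2: "D2 \<subseteq> verts H2" "\<phi>2 ` D2 = W2" "inj_on \<psi>2 (edges K2)"
    using M2 by (auto simp: model_def K2_def induced_def)
  have c1: "conn_in H1 {z \<in> D1. \<phi>1 z = \<phi>1 x} x y" if "x \<in> D1" "y \<in> D1" "\<phi>1 x = \<phi>1 y" for x y
    using M1 that unfolding model_def by blast
  have c2: "conn_in H2 {z \<in> D2. \<phi>2 z = \<phi>2 x} x y" if "x \<in> D2" "y \<in> D2" "\<phi>2 x = \<phi>2 y" for x y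
    using M2 that unfolding model_def by blast
  have e1: "\<psi>1 e \<in> edges H1 \<and> \<phi>1 ` ends H1 (\<psi>1 e) = ends G e \<and> ends H1 (\<psi>1 e) \<subseteq> D1"
    if "e \<in> edges G" "ends G e \<subseteq> W1" for e
  proof -
    have "e \<in> edges K1" using that by (simp add: K1_def induced_def)
    then show ?thesis using M1 unfolding model_def by (simp add: K1_def induced_def)
  qed
  have e2: "\<psi>2 e \<in> edges H2 \<and> \<phi>2 ` ends H2 (\<psi>2 e) = ends G e \<and> ends H2 (\<psi>2 e) \<subseteq> D2"
    if "e \<in> edges G" "ends G e \<subseteq> W2" for e
  proof -
    have "e \<in> edges K2" using that by (simp add: K2_def induced_def)
    then show ?thesis using M2 unfolding model_def by (simp add: K2_def induced_def)
  qed
  have np: "\<And>x y::nat. 2*x \<noteq> Suc (2*y)" by presburger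
  have np3: "\<And>x y::nat. 3*x \<noteq> Suc (3*y)" by presburger
  have MJ: "model K J \<phi> D \<psi>"
    unfolding model_def
  proof (intro conjI ballI impI)
    show "D \<subseteq> verts J" using m1 m2 by (auto simp: D_def J_def)
    have "\<phi> ` D = \<phi>1 ` D1 \<union> \<phi>2 ` D2" by (simp add: D_def image_Un image_comp comp_def)
    then show "\<phi> ` D = verts K" using m1 m2 by (simp add: K_def induced_def)
  next
    fix x y assume x: "x \<in> D" and y: "y \<in> D" and xy: "\<phi> x = \<phi> y"
    let ?B = "{z \<in> D. \<phi> z = \<phi> x}"
    show "conn_in J ?B x y"
    proof (cases "x \<in> (\<lambda>x. 2*x) ` D1")
      case True
      then obtain x' where x': "x' \<in> D1" "x = 2*x'" by blast
      show ?thesis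
      proof (cases "y \<in> (\<lambda>x. 2*x) ` D1")
        case True
        then obtain y' where y': "y' \<in> D1" "y = 2*y'" by blast
        have "conn_in J ?B ((\<lambda>x. 2*x) x') ((\<lambda>x. 2*x) y')"
        proof (rule conn_map[OF c1[of x' y']])
          show "x' \<in> D1" "y' \<in> D1" "\<phi>1 x' = \<phi>1 y'" using x' y' xy by auto
        next
          fix p q assume p: "p \<in> {z \<in> D1. \<phi>1 z = \<phi>1 x'}" and q: "q \<in> {z \<in> D1. \<phi>1 z = \<phi>1 x'}"
            and pq: "adj H1 p q"
          then obtain g where g: "g \<in> edges H1" "ends H1 g = {p, q}" by (auto simp: adj_def)
          have "adj J (2*p) (2*q)" unfolding adj_def J_def using g by (intro bexI[of _ "3*g"]) auto
          moreover have "2*p \<in> ?B" "2*q \<in> ?B" using p q x' by (auto simp: D_def)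
          ultimately show "conn_in J ?B (2*p) (2*q)" by (simp add: conn_step)
        qed
        then show ?thesis using x' y' by simp
      next
        case False
        then obtain y' where y': "y' \<in> D2" "y = Suc (2*y')" using y by (auto simp: D_def)
        have "\<phi>1 x' \<in> W1" "\<phi>2 y' \<in> W2" using x' y' m1 m2 by auto
        then show ?thesis using xy x' y' dW by auto
      qed
    next
      case False
      then obtain x' where x': "x' \<in> D2" "x = Suc (2*x')" using x by (auto simp: D_def)
      show ?thesis
      proof (cases "y \<in> (\<lambda>x. 2*x) ` D1")
        case True
        then obtain y' where y': "y' \<in> D1" "y = 2*y'" by blast
        have "\<phi>2 x' \<in> W2" "\<phi>1 y' \<in> W1" using x' y' m1 m2 by auto
        then show ?thesis using xy x' y' dW by auto
      next
        case False
        then obtain y' where y': "y' \<in> D2" "y = Suc (2*y')" using y by (auto simp: D_def)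
        have "conn_in J ?B ((\<lambda>x. Suc (2*x)) x') ((\<lambda>x. Suc (2*x)) y')"
        proof (rule conn_map[OF c2[of x' y']])
          show "x' \<in> D2" "y' \<in> D2" "\<phi>2 x' = \<phi>2 y'" using x' y' xy by auto
        next
          fix p q assume p: "p \<in> {z \<in> D2. \<phi>2 z = \<phi>2 x'}" and q: "q \<in> {z \<in> D2. \<phi>2 z = \<phi>2 x'}"
            and pq: "adj H2 p q"
          then obtain g where g: "g \<in> edges H2" "ends H2 g = {p, q}" by (auto simp: adj_def)
          have "adj J (Suc (2*p)) (Suc (2*q))" unfolding adj_def J_def using g
            by (intro bexI[of _ "Suc (3*g)"]) auto
          moreover have "Suc (2*p) \<in> ?B" "Suc (2*q) \<in> ?B" using p q x' by (auto simp: D_def)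
          ultimately show "conn_in J ?B (Suc (2*p)) (Suc (2*q))" by (simp add: conn_step)
        qed
        then show ?thesis using x' y' by simp
      qed
    qed
  next
    show "inj_on \<psi> (edges K)"
    proof (rule inj_onI)
      fix e e' assume e: "e \<in> edges K" and e': "e' \<in> edges K" and ee: "\<psi> e = \<psi> e'"
      have eG: "e \<in> edges G" "ends G e \<subseteq> W1 \<union> W2" using e by (auto simp: K_def induced_def)
      have eG': "e' \<in> edges G" "ends G e' \<subseteq> W1 \<union> W2" using e' by (auto simp: K_def induced_def)
      show "e = e'"
      proof (cases "ends G e \<subseteq> W1"; cases "ends G e' \<subseteq> W1")
        assume a: "ends G e \<subseteq> W1" "ends G e' \<subseteq> W1"
        then have "\<psi>1 e = \<psi>1 e'" using ee by (simp add: \<psi>_def)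
        moreover have "e \<in> edges K1" "e' \<in> edges K1" using a eG eG' by (auto simp: K1_def induced_def)
        ultimately show ?thesis using m1(3) by (auto dest: inj_onD)
      next
        assume a: "ends G e \<subseteq> W1" "\<not> ends G e' \<subseteq> W1"
        then show ?thesis using ee np3 by (simp add: \<psi>_def)
      next
        assume a: "\<not> ends G e \<subseteq> W1" "ends G e' \<subseteq> W1"
        then show ?thesis using ee np3 by (simp add: \<psi>_def) (metis np3)
      next
        assume a: "\<not> ends G e \<subseteq> W1" "\<not> ends G e' \<subseteq> W1"
        then have "\<psi>2 e = \<psi>2 e'" using ee by (simp add: \<psi>_def)
        moreover have "ends G e \<subseteq> W2" "ends G e' \<subseteq> W2" using a sep eG eG' by blast+
        then have "e \<in> edges K2" "e' \<in> edges K2" using eG eG' by (auto simp: K2_def induced_def)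
        ultimately show ?thesis using m2(3) by (auto dest: inj_onD)
      qed
    qed
  next
    fix e assume e: "e \<in> edges K"
    have eG: "e \<in> edges G" "ends G e \<subseteq> W1 \<union> W2" using e by (auto simp: K_def induced_def)
    have eK: "ends K e = ends G e" by (simp add: K_def induced_def)
    have "\<psi> e \<in> edges J \<and> \<phi> ` ends J (\<psi> e) = ends K e \<and> ends J (\<psi> e) \<subseteq> D"
    proof (cases "ends G e \<subseteq> W1")
      case True
      have r: "\<psi>1 e \<in> edges H1" "\<phi>1 ` ends H1 (\<psi>1 e) = ends G e" "ends H1 (\<psi>1 e) \<subseteq> D1"
        using e1[OF eG(1) True] by auto
      have "\<phi> ` ends J (\<psi> e) = \<phi>1 ` ends H1 (\<psi>1 e)"
        using True by (simp add: \<psi>_def J_def image_comp comp_def)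
      then show ?thesis using True r eK by (auto simp: \<psi>_def J_def D_def)
    next
      case False
      then have W: "ends G e \<subseteq> W2" using sep eG by blast
      have r: "\<psi>2 e \<in> edges H2" "\<phi>2 ` ends H2 (\<psi>2 e) = ends G e" "ends H2 (\<psi>2 e) \<subseteq> D2"
        using e2[OF eG(1) W] by auto
      have "\<phi> ` ends J (\<psi> e) = \<phi>2 ` ends H2 (\<psi>2 e)"
        using False by (simp add: \<psi>_def J_def image_comp comp_def)
      then show ?thesis using False r eK by (auto simp: \<psi>_def J_def D_def)
    qed
    then show "\<psi> e \<in> edges J" "\<phi> ` ends J (\<psi> e) = ends K e" "ends J (\<psi> e) \<subseteq> D" by auto
  qed
  have "is_minor K J" by (rule model_minor[OF GJ GK MJ])
  then have "sp_floor K \<le> sp J" by (rule sp_floor_le[OF GJ])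
  then show ?thesis using spJ H1(3) H2(3) unfolding K_def K1_def K2_def by linarith
qed

lemma le_sets:
  assumes G: "is_graph G"
  shows "finite CC \<Longrightarrow> CC \<noteq> {} \<Longrightarrow> CC \<subseteq> components G \<Longrightarrow>
    sp_floor (induced G (\<Union>CC)) \<le> (\<Sum>C\<in>CC. sp_floor (induced G C))"
proof (induction CC rule: finite_ne_induct)
  case (singleton C) then show ?case by simp
next
  case (insert C CC)
  have C: "C \<in> components G" and CC: "CC \<subseteq> components G" using insert.prems by auto
  have IH: "sp_floor (induced G (\<Union>CC)) \<le> (\<Sum>C\<in>CC. sp_floor (induced G C))"
    using insert.IH CC by blast
  have W1: "\<Union>CC \<subseteq> verts G" "\<Union>CC \<noteq> {}" using CC comp_sub comp_ne insert.hyps(2) by blast+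
  have W2: "C \<subseteq> verts G" "C \<noteq> {}" using comp_sub[OF C] comp_ne[OF C] by auto
  have dW: "\<Union>CC \<inter> C = {}"
  proof -
    have "C' \<inter> C = {}" if "C' \<in> CC" for C'
      using comp_disj[of C' G C] that CC C insert.hyps(3) by blast
    then show ?thesis by blast
  qed
  have sep: "ends G e \<subseteq> \<Union>CC \<or> ends G e \<subseteq> C"
    if e: "e \<in> edges G" "ends G e \<subseteq> \<Union>CC \<union> C" for e
  proof -
    have "card (ends G e) = 2" using G e by (simp add: is_graph_def)
    then obtain p q where pq: "ends G e = {p, q}" by (meson card_2_iff)
    have adj: "adj G p q" "adj G q p" using e(1) pq by (auto simp: adj_def insert_commute)
    show ?thesis
    proof (cases "p \<in> C")
      case True
      then have "q \<in> C" using comp_closed[OF G C True adj(1)] by simp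
      then show ?thesis using True pq by simp
    next
      case False
      then have "p \<in> \<Union>CC" using e(2) pq by auto
      then obtain C' where C': "C' \<in> CC" "p \<in> C'" by blast
      then have "q \<in> C'" using comp_closed[OF G _ C'(2) adj(1)] CC by blast
      then show ?thesis using C' pq by auto
    qed
  qed
  have "sp_floor (induced G (\<Union>CC \<union> C)) \<le> sp_floor (induced G (\<Union>CC)) + sp_floor (induced G C)"
    by (rule le_binary[OF G W1 W2 dW sep])
  moreover have "\<Union>(insert C CC) = \<Union>CC \<union> C" by auto
  moreover have "(\<Sum>C\<in>insert C CC. sp_floor (induced G C)) = sp_floor (induced G C) + (\<Sum>C\<in>CC. sp_floor (induced G C))"
    using insert.hyps(1,3) by simp
  ultimately show ?case using IH by simp
qed

lemma le_direction:
  assumes G: "is_graph G"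
  shows "sp_floor G \<le> (\<Sum>C\<in>components G. sp_floor (induced G C))"
proof -
  have "components G \<noteq> {}" using G comp_union[of G] by (auto simp: is_graph_def)
  then have "sp_floor (induced G (\<Union>(components G))) \<le> (\<Sum>C\<in>components G. sp_floor (induced G C))"
    using le_sets[OF G components_finite[OF G]] by blast
  then show ?thesis using comp_union[of G] induced_all[OF G] by simp
qed

theorem corollary3p2:
  assumes "is_graph G"
  shows "sp_floor G = (\<Sum>C\<in>components G. sp_floor (induced G C))"
  using le_direction[OF assms] ge_direction[OF assms] by simp

end
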